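(* Let $G(\vec x)$ be a positive guard over the variables $\vec x$, and let $h$ be a history. Then the set of solutions of the guard instantiation problem $(h,G(\vec x))$ is finite. Moreover, every solution uses only constants that appear in $h$.
   Context: A history $h$ is a finite list of sessions $h_1,\dots,h_{|h|}$. Each session is a finite set of events $p(c_1,\dots,c_n)$, where $p$ is an uninterpreted predicate symbol and the $c_i$ are constants. Simple guards are generated by the grammar $$\gamma::=p(\vec u)\mid\gamma\wedge\gamma\mid\mathbf{G}^{-1}\gamma\mid\mathbf{F}^{-1}\gamma,$$ where $\vec u$ is a list of variables and constants (no function symbols). Positive guards $G(\vec x)$ over variables $\vec x$ are formulas whose only variables are among $\vec x$, generated by $$G::=\gamma(\vec x)\mid G\wedge G\mid G\vee G\mid\mathbf{G}^{-1}G\mid\mathbf{F}^{-1}G\mid G\,\mathbf{S}\,G.$$ For closed formulas and $1\le i\le|h|$: - $(h,i)\models p(\vec c)$ iff $p(\vec c)\in h_i$; - $\wedge$ and $\vee$ are interpreted classically; - $(h,i)\models\psi_1\,\mathbf{S}\,\psi_2$ iff there is $j\le i$ with $(h,j)\models\psi_2$ and $(h,k)\models\psi_1$ for all $k$ with $j<k\le i$; - $\mathbf{F}^{-1}\psi$ holds at $i$ iff $\psi$ holds at some $j\le i$; - $\mathbf{G}^{-1}\psi$ holds at $i$ iff $\psi$ holds at all $j\le i$. We write $h\models\psi$ for $(h,|h|)\models\psi$. The guard instantiation problem $(h,G(\vec x))$ asks for a list $\vec u$ of constants such that $h\models G(\vec u)$. Any such list is called a solution. *)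

theory Defs
  imports Main
begin

datatype ('v, 'c) trm = Var 'v | Const 'c

text \<open>Past-time formulas; the argument type 'a of atoms is either
  ('v,'c) trm (open formulas) or 'c (closed formulas).
  Hist = G^{-1}, Once = F^{-1}, Since = S.\<close>
datatype ('p, 'a) fm =
    Atom 'p "'a list"
  | And "('p, 'a) fm" "('p, 'a) fm"
  | Or "('p, 'a) fm" "('p, 'a) fm"
  | Hist "('p, 'a) fm"
  | Once "('p, 'a) fm"
  | Since "('p, 'a) fm" "('p, 'a) fm"

text \<open>Events p(c1,...,cn) are pairs (p, [c1,...,cn]); a session is a set of events;
  a history is a list of sessions h_1 ... h_|h| (h_i = h ! (i-1)).\<close>
type_synonym ('p, 'c) session = "('p \<times> 'c list) set"
type_synonym ('p, 'c) history = "('p, 'c) session list"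

text \<open>Semantics of closed formulas at position i (1-based).\<close>
primrec sat :: "('p, 'c) history \<Rightarrow> nat \<Rightarrow> ('p, 'c) fm \<Rightarrow> bool" where
  "sat h i (Atom p cs) = (1 \<le> i \<and> i \<le> length h \<and> (p, cs) \<in> h ! (i - 1))"
| "sat h i (And a b) = (sat h i a \<and> sat h i b)"
| "sat h i (Or a b) = (sat h i a \<or> sat h i b)"
| "sat h i (Hist a) = (\<forall>j. 1 \<le> j \<and> j \<le> i \<longrightarrow> sat h j a)"
| "sat h i (Once a) = (\<exists>j. 1 \<le> j \<and> j \<le> i \<and> sat h j a)"
| "sat h i (Since a b) =
     (\<exists>j. 1 \<le> j \<and> j \<le> i \<and> sat h j b \<and> (\<forall>k. j < k \<and> k \<le> i \<longrightarrow> sat h k a))"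

text \<open>h |= psi iff (h,|h|) |= psi; the semantics is only defined for 1 <= |h|.\<close>
definition models :: "('p, 'c) history \<Rightarrow> ('p, 'c) fm \<Rightarrow> bool" where
  "models h \<phi> \<longleftrightarrow> h \<noteq> [] \<and> sat h (length h) \<phi>"

fun trm_vars :: "('v, 'c) trm \<Rightarrow> 'v set" where
  "trm_vars (Var v) = {v}"
| "trm_vars (Const c) = {}"

primrec fm_vars :: "('p, ('v, 'c) trm) fm \<Rightarrow> 'v set" where
  "fm_vars (Atom p us) = (\<Union>u\<in>set us. trm_vars u)"
| "fm_vars (And a b) = fm_vars a \<union> fm_vars b"
| "fm_vars (Or a b) = fm_vars a \<union> fm_vars b"
| "fm_vars (Hist a) = fm_vars a"
| "fm_vars (Once a) = fm_vars a"
| "fm_vars (Since a b) = fm_vars a \<union> fm_vars b"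

primrec simple_guard :: "('p, 'a) fm \<Rightarrow> bool" where
  "simple_guard (Atom p us) = True"
| "simple_guard (And a b) = (simple_guard a \<and> simple_guard b)"
| "simple_guard (Or a b) = False"
| "simple_guard (Hist a) = simple_guard a"
| "simple_guard (Once a) = simple_guard a"
| "simple_guard (Since a b) = False"

inductive pos_guard :: "'v list \<Rightarrow> ('p, ('v, 'c) trm) fm \<Rightarrow> bool" for xs where
  pg_simple: "simple_guard g \<Longrightarrow> fm_vars g = set xs \<Longrightarrow> pos_guard xs g"
| pg_and: "pos_guard xs a \<Longrightarrow> pos_guard xs b \<Longrightarrow> pos_guard xs (And a b)"
| pg_or: "pos_guard xs a \<Longrightarrow> pos_guard xs b \<Longrightarrow> pos_guard xs (Or a b)"
| pg_hist: "pos_guard xs a \<Longrightarrow> pos_guard xs (Hist a)"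
| pg_once: "pos_guard xs a \<Longrightarrow> pos_guard xs (Once a)"
| pg_since: "pos_guard xs a \<Longrightarrow> pos_guard xs b \<Longrightarrow> pos_guard xs (Since a b)"

fun inst_trm :: "'v list \<Rightarrow> 'c list \<Rightarrow> ('v, 'c) trm \<Rightarrow> 'c" where
  "inst_trm xs us (Const c) = c"
| "inst_trm xs us (Var v) = the (map_of (zip xs us) v)"

definition inst :: "'v list \<Rightarrow> 'c list \<Rightarrow> ('p, ('v, 'c) trm) fm \<Rightarrow> ('p, 'c) fm" where
  "inst xs us G = map_fm id (inst_trm xs us) G"

definition solutions :: "('p, 'c) history \<Rightarrow> 'v list \<Rightarrow> ('p, ('v, 'c) trm) fm \<Rightarrow> 'c list set" where
  "solutions h xs G = {us. length us = length xs \<and> models h (inst xs us G)}"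

definition hist_consts :: "('p, 'c) history \<Rightarrow> 'c set" where
  "hist_consts h = (\<Union>s\<in>set h. \<Union>e\<in>s. set (snd e))"

end

theory Submission
  imports Defs
begin

lemma simple_consts:
  "simple_guard g \<Longrightarrow> 1 \<le> i \<Longrightarrow> sat h i (map_fm pm f g) \<Longrightarrow> v \<in> fm_vars g \<Longrightarrow> f (Var v) \<in> hist_consts h"
proof (induction g arbitrary: i)
  case (Atom p us)
  from Atom.prems(4) obtain u where hu: "u \<in> set us" "v \<in> trm_vars u" by auto
  from hu(2) have "u = Var v" by (cases u) auto
  with hu(1) have vin: "Var v \<in> set us" by simp
  from Atom.prems(3) have a1: "1 \<le> i" "i \<le> length h" "(pm p, map f us) \<in> h ! (i - 1)" by simp_all
  then have "i - 1 < length h" by linarith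
  then have hin: "h ! (i - 1) \<in> set h" by (rule nth_mem)
  have "f (Var v) \<in> set (snd (pm p, map f us))" using vin by simp
  then have "f (Var v) \<in> (\<Union>e\<in>h ! (i - 1). set (snd e))" using a1(3) by blast
  then show ?case unfolding hist_consts_def using hin by blast
next
  case (And g1 g2)
  from And.prems(1,3) have s1: "sat h i (map_fm pm f g1)" and s2: "sat h i (map_fm pm f g2)"
    and q1: "simple_guard g1" and q2: "simple_guard g2" by simp_all
  show ?case
  proof (cases "v \<in> fm_vars g1")
    case True
    show ?thesis by (rule And.IH(1)[OF q1 And.prems(2) s1 True])
  next
    case False
    then have v2: "v \<in> fm_vars g2" using And.prems(4) by simp
    show ?thesis by (rule And.IH(2)[OF q2 And.prems(2) s2 v2])
  qed
next
  case (Or g1 g2)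
  have False using Or.prems(1) by (simp only: simple_guard.simps)
  then show ?case ..
next
  case (Hist g)
  have q: "simple_guard g" using Hist.prems(1) by simp
  have s: "sat h i (map_fm pm f g)" using Hist.prems(2,3) by auto
  have v: "v \<in> fm_vars g" using Hist.prems(4) by simp
  show ?case by (rule Hist.IH[OF q Hist.prems(2) s v])
next
  case (Once g)
  have q: "simple_guard g" using Once.prems(1) by simp
  from Once.prems(3) obtain j where j: "1 \<le> j" "sat h j (map_fm pm f g)" by auto
  have v: "v \<in> fm_vars g" using Once.prems(4) by simp
  show ?case by (rule Once.IH[OF q j v])
next
  case (Since g1 g2)
  have False using Since.prems(1) by (simp only: simple_guard.simps)
  then show ?case ..
qed

lemma pos_consts:
  "pos_guard xs G \<Longrightarrow> 1 \<le> i \<Longrightarrow> sat h i (map_fm pm f G) \<Longrightarrow> v \<in> set xs \<Longrightarrow> f (Var v) \<in> hist_consts h"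
proof (induction arbitrary: i rule: pos_guard.induct)
  case (pg_simple g)
  show ?case by (rule simple_consts[OF pg_simple.hyps(1) pg_simple.prems(1,2)]) (use pg_simple in simp)
next
  case (pg_and a b)
  from pg_and.prems(2) have "sat h i (map_fm pm f a)" by simp
  then show ?case by (rule pg_and.IH(1)[OF pg_and.prems(1) _ pg_and.prems(3)])
next
  case (pg_or a b)
  from pg_or.prems(2) have "sat h i (map_fm pm f a) \<or> sat h i (map_fm pm f b)" by simp
  then show ?case
  proof
    assume "sat h i (map_fm pm f a)"
    then show ?case by (rule pg_or.IH(1)[OF pg_or.prems(1) _ pg_or.prems(3)])
  next
    assume "sat h i (map_fm pm f b)"
    then show ?case by (rule pg_or.IH(2)[OF pg_or.prems(1) _ pg_or.prems(3)])
  qed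
next
  case (pg_hist a)
  have "sat h i (map_fm pm f a)" using pg_hist.prems(1,2) by auto
  then show ?case by (rule pg_hist.IH[OF pg_hist.prems(1) _ pg_hist.prems(3)])
next
  case (pg_once a)
  from pg_once.prems(2) obtain j where j: "1 \<le> j" "sat h j (map_fm pm f a)" by auto
  show ?case by (rule pg_once.IH[OF j pg_once.prems(3)])
next
  case (pg_since a b)
  from pg_since.prems(2) obtain j where j: "1 \<le> j" "sat h j (map_fm pm f b)" by auto
  show ?case by (rule pg_since.IH(2)[OF j pg_since.prems(3)])
qed

theorem mainTheorem7:
  fixes h :: "('p, 'c) history" and xs :: "'v list" and G :: "('p, ('v, 'c) trm) fm"
  assumes "\<forall>s\<in>set h. finite s"
    and "distinct xs"
    and "pos_guard xs G"
  shows "finite (solutions h xs G) \<and> (\<forall>us\<in>solutions h xs G. set us \<subseteq> hist_consts h)"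
proof -
  have sub: "set us \<subseteq> hist_consts h" if "us \<in> solutions h xs G" for us
  proof
    fix u assume "u \<in> set us"
    then obtain k where k: "k < length us" "u = us ! k" by (auto simp: in_set_conv_nth)
    have len: "length xs = length us" and m: "models h (inst xs us G)"
      using that by (auto simp: solutions_def)
    have "inst_trm xs us (Var (xs ! k)) = us ! k"
      using map_of_zip_nth[OF len assms(2) k(1)] by simp
    moreover have "inst_trm xs us (Var (xs ! k)) \<in> hist_consts h"
    proof (rule pos_consts[OF assms(3), of "length h"])
      show "1 \<le> length h" using m by (cases h) (auto simp: models_def)
      show "sat h (length h) (map_fm id (inst_trm xs us) G)" using m by (simp add: models_def inst_def)
      show "xs ! k \<in> set xs" using len k by simp
    qed
    ultimately show "u \<in> hist_consts h" using k by simp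
  qed
  have fin: "finite (hist_consts h)"
    unfolding hist_consts_def using assms(1) by auto
  have "solutions h xs G \<subseteq> {us. set us \<subseteq> hist_consts h \<and> length us = length xs}"
    using sub by (auto simp: solutions_def)
  moreover have "finite {us. set us \<subseteq> hist_consts h \<and> length us = length xs}"
    using finite_lists_length_eq[OF fin] by simp
  ultimately show ?thesis using sub finite_subset by blast
qed

end
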